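(* Let $f,g:\mathbb R_+\to\mathbb R_+$ be increasing functions with $f$ differentiable and $-f(0)<g(0)$. Let $(\Omega,\mathcal F,(\mathcal F_n)_{n\ge0},\mathbb P)$ be a filtered probability space and $(M_n)_{n\ge0}$ a supermartingale with $M_n\ge -f(n)$ for all integers $n\ge0$ and $\mathbb E[M_0]\in[-f(0),g(0)]$. Then \[ \mathbb P\{\exists n\ge0: M_n\ge g(n)\}\;\le\;1-\frac{g(0)-\mathbb E[M_0]}{g(0)+f(0)}\exp\Big(-\int_0^\infty\frac{f'(t)}{g(t)+f(t)}\,dt\Big). \]
   Context: An adapted process $(M_n)_{n\ge0}$ is a supermartingale if $\mathbb E[|M_n|]<\infty$ and $\mathbb E[M_{n+1}\mid\mathcal F_n]\le M_n$ for all $n\ge 0$. *)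

theory Defs
  imports "HOL-Probability.Probability"
begin

definition discrete_filtration :: "'a measure \<Rightarrow> (nat \<Rightarrow> 'a measure) \<Rightarrow> bool" where
  "discrete_filtration M F \<longleftrightarrow>
     (\<forall>n. subalgebra M (F n)) \<and> (\<forall>n m. n \<le> m \<longrightarrow> sets (F n) \<subseteq> sets (F m))"

definition supermartingale :: "'a measure \<Rightarrow> (nat \<Rightarrow> 'a measure) \<Rightarrow> (nat \<Rightarrow> 'a \<Rightarrow> real) \<Rightarrow> bool" where
  "supermartingale M F X \<longleftrightarrow>
     (\<forall>n. X n \<in> borel_measurable (F n)) \<and>
     (\<forall>n. integrable M (X n)) \<and>
     (\<forall>n. AE x in M. real_cond_exp M (F n) (X (Suc n)) x \<le> X n x)"

end

theory Submission
  imports Defs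
begin

lemma supermart_step:
  assumes prob: "prob_space M" and filt: "discrete_filtration M F"
    and smart: "supermartingale M F X" and B: "B \<in> sets (F n)"
  shows "(\<integral>x. indicator B x * X (Suc n) x \<partial>M) \<le> (\<integral>x. indicator B x * X n x \<partial>M)"
proof -
  have sub: "subalgebra M (F n)" using filt unfolding discrete_filtration_def by auto
  interpret finite_measure_subalgebra M "F n"
    using prob sub by (simp add: finite_measure_subalgebra_def finite_measure_subalgebra_axioms_def prob_space.finite_measure)
  have int: "\<And>k. integrable M (X k)" using smart unfolding supermartingale_def by auto
  have BM: "B \<in> sets M" using B sub unfolding subalgebra_def by auto
  have "(\<integral>x. indicator B x * X (Suc n) x \<partial>M) = (\<integral>x\<in>B. X (Suc n) x \<partial>M)"
    by (simp add: set_lebesgue_integral_def)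
  also have "\<dots> = (\<integral>x\<in>B. real_cond_exp M (F n) (X (Suc n)) x \<partial>M)"
    by (rule real_cond_exp_intA[OF int B])
  also have "\<dots> = (\<integral>x. indicator B x * real_cond_exp M (F n) (X (Suc n)) x \<partial>M)"
    by (simp add: set_lebesgue_integral_def)
  also have "\<dots> \<le> (\<integral>x. indicator B x * X n x \<partial>M)"
  proof (rule integral_mono_AE)
    show "integrable M (\<lambda>x. indicator B x * real_cond_exp M (F n) (X (Suc n)) x)"
      using integrable_mult_indicator[OF BM real_cond_exp_int(1)[OF int]] by simp
    show "integrable M (\<lambda>x. indicator B x * X n x)"
      using integrable_mult_indicator[OF BM int] by simp
    show "AE x in M. indicator B x * real_cond_exp M (F n) (X (Suc n)) x \<le> indicator B x * X n x"
      using smart unfolding supermartingale_def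
      by (auto elim!: AE_mp[OF spec[of _ n]] simp: indicator_def)
  qed
  finally show ?thesis .
qed


lemma lin_aux: "(c::real) \<noteq> 0 \<Longrightarrow> (1 - a * G / c) + a / c * x = 1 - a * (G - x) / c"
  by (simp add: field_simps)

lemma lin_aux2: "(c::real) = gg + ff \<Longrightarrow> c \<noteq> 0 \<Longrightarrow> (1 - 1 * gg / c) + 1 / c * x = (x + ff) / c"
proof -
  assume h: "c = gg + ff" "c \<noteq> 0"
  have "(1 - 1 * gg / c) + 1 / c * x = (c - gg + x) / c" using h(2) by (simp add: field_simps)
  then show ?thesis using h(1) by (simp add: add.commute)
qed

definition rr :: "(real \<Rightarrow> real) \<Rightarrow> (real \<Rightarrow> real) \<Rightarrow> nat \<Rightarrow> real" where
  "rr f g k = (g (real (Suc k)) + f (real k)) / (g (real (Suc k)) + f (real (Suc k)))"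

definition aa :: "(real \<Rightarrow> real) \<Rightarrow> (real \<Rightarrow> real) \<Rightarrow> nat \<Rightarrow> nat \<Rightarrow> real" where
  "aa f g N n = (\<Prod>k\<in>{n..<N}. rr f g k)"

definition phi :: "(real \<Rightarrow> real) \<Rightarrow> (real \<Rightarrow> real) \<Rightarrow> nat \<Rightarrow> nat \<Rightarrow> real \<Rightarrow> real" where
  "phi f g N n x = (1 - aa f g N n * g (real n) / (g (real n) + f (real n)))
     + aa f g N n / (g (real n) + f (real n)) * x"

definition AA :: "'a measure \<Rightarrow> (nat \<Rightarrow> 'a \<Rightarrow> real) \<Rightarrow> (real \<Rightarrow> real) \<Rightarrow> nat \<Rightarrow> 'a set" where
  "AA M X g n = {x\<in>space M. \<forall>k\<in>{..<n}. X k x < g (real k)}"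

definition EE :: "'a measure \<Rightarrow> (nat \<Rightarrow> 'a \<Rightarrow> real) \<Rightarrow> (real \<Rightarrow> real) \<Rightarrow> nat \<Rightarrow> nat \<Rightarrow> 'a set" where
  "EE M X g N n = {x\<in>space M. (\<forall>k\<in>{..<n}. X k x < g (real k)) \<and> (\<exists>k\<in>{n..N}. g (real k) \<le> X k x)}"

context
  fixes f g :: "real \<Rightarrow> real"
  assumes f_nonneg: "\<And>t. t \<ge> 0 \<Longrightarrow> f t \<ge> 0"
    and g_nonneg: "\<And>t. t \<ge> 0 \<Longrightarrow> g t \<ge> 0"
    and f_mono: "mono_on {0..} f"
    and g_mono: "mono_on {0..} g"
    and fg0: "- f 0 < g 0"
begin

lemma cpos: "t \<ge> 0 \<Longrightarrow> g t + f t > 0"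
proof -
  assume t: "t \<ge> 0"
  have "g 0 \<le> g t" "f 0 \<le> f t" using t f_mono g_mono by (auto intro: mono_onD)
  then show ?thesis using fg0 by linarith
qed

lemma rr_pos: "0 < rr f g k" and rr_le1: "rr f g k \<le> 1"
proof -
  have "f (real k) \<le> f (real (Suc k))" using f_mono by (auto intro: mono_onD)
  moreover have "0 < g (real (Suc k)) + f (real k)"
    using cpos[of "real k"] g_mono by (smt (verit) mono_onD atLeast_iff of_nat_0_le_iff of_nat_Suc)
  ultimately show "0 < rr f g k" "rr f g k \<le> 1" unfolding rr_def by (auto simp: divide_simps)
qed

lemma aa_pos: "0 < aa f g N n" and aa_le1: "aa f g N n \<le> 1"
  unfolding aa_def using rr_pos rr_le1 by (auto intro: prod_pos prod_le_1 less_imp_le)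

lemma aa_N: "aa f g N N = 1" unfolding aa_def by simp

lemma aa_step: "n < N \<Longrightarrow> aa f g N n = rr f g n * aa f g N (Suc n)"
  unfolding aa_def by (simp add: prod.atLeast_Suc_lessThan)

lemma phi_ge1: "g (real n) \<le> x \<Longrightarrow> 1 \<le> phi f g N n x"
proof -
  assume x: "g (real n) \<le> x"
  have c: "g (real n) + f (real n) > 0" using cpos by simp
  have "0 \<le> aa f g N n / (g (real n) + f (real n))" using aa_pos[of N n] c by simp
  then have "aa f g N n / (g (real n) + f (real n)) * g (real n) \<le> aa f g N n / (g (real n) + f (real n)) * x"
    using x by (intro mult_left_mono) auto
  then show ?thesis unfolding phi_def by (simp add: field_simps)
qed

lemma phi_nonneg: "- f (real N) \<le> x \<Longrightarrow> 0 \<le> phi f g N N x"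
proof -
  assume x: "- f (real N) \<le> x"
  have c: "g (real N) + f (real N) > 0" using cpos by simp
  have "phi f g N N x = (x + f (real N)) / (g (real N) + f (real N))"
    unfolding phi_def aa_N using c by (intro lin_aux2) auto
  then show ?thesis using x c by simp
qed

lemma phi_step:
  assumes n: "n < N" and x: "- f (real n) \<le> x"
  shows "phi f g N (Suc n) x \<le> phi f g N n x"
proof -
  define a where "a = aa f g N (Suc n)"
  define G where "G = g (real (Suc n))"
  define Fp where "Fp = f (real (Suc n))"
  define gg where "gg = g (real n)"
  define ff where "ff = f (real n)"
  have a: "0 < a" unfolding a_def by (rule aa_pos)
  have c1: "0 < G + Fp" unfolding G_def Fp_def by (rule cpos) simp
  have c0: "0 < gg + ff" unfolding gg_def ff_def by (rule cpos) simp
  have Gg: "gg \<le> G" unfolding G_def gg_def using g_mono by (auto intro: mono_onD)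
  have e1: "phi f g N (Suc n) x = 1 - a * (G - x) / (G + Fp)"
    unfolding phi_def a_def[symmetric] G_def[symmetric] Fp_def[symmetric] using c1
    by (intro lin_aux) auto
  have r: "rr f g n = (G + ff) / (G + Fp)" unfolding rr_def G_def Fp_def ff_def by simp
  have "phi f g N n x = 1 - (rr f g n * a) * (gg - x) / (gg + ff)"
    unfolding phi_def aa_step[OF n] a_def[symmetric] gg_def[symmetric] ff_def[symmetric] using c0
    by (intro lin_aux) auto
  also have "\<dots> = 1 - a * ((G + ff) * (gg - x)) / ((G + Fp) * (gg + ff))"
    unfolding r by simp
  finally have e0: "phi f g N n x = 1 - a * ((G + ff) * (gg - x)) / ((G + Fp) * (gg + ff))" .
  have key: "(G + ff) * (gg - x) \<le> (G - x) * (gg + ff)"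
    using mult_nonneg_nonneg[of "G - gg" "ff + x"] Gg x unfolding ff_def
    by (simp add: algebra_simps)
  have "(G + ff) * (gg - x) / ((G + Fp) * (gg + ff)) \<le> (G - x) * (gg + ff) / ((G + Fp) * (gg + ff))"
    using key c1 c0 by (intro divide_right_mono) auto
  also have "\<dots> = (G - x) / (G + Fp)" using c0 by simp
  finally have "a * ((G + ff) * (gg - x) / ((G + Fp) * (gg + ff))) \<le> a * ((G - x) / (G + Fp))"
    using a by (intro mult_left_mono) auto
  then show ?thesis unfolding e1 e0 by simp
qed


lemma lin_int:
  assumes "finite_measure M" "B \<in> sets M" "integrable M Y"
  shows "(\<integral>x. indicator B x * (\<alpha> + \<beta> * Y x) \<partial>M) = \<alpha> * measure M B + \<beta> * (\<integral>x. indicator B x * Y x \<partial>M)"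
proof -
  interpret finite_measure M by fact
  have i1: "integrable M (\<lambda>x. indicator B x * \<alpha>)"
    using assms(2) by (intro integrable_mult_left) (simp add: integrable_indicator_iff less_top[symmetric] emeasure_finite)
  have i2: "integrable M (\<lambda>x. \<beta> * (indicator B x * Y x))"
    using integrable_mult_indicator[OF assms(2,3)] by simp
  have "(\<integral>x. indicator B x * (\<alpha> + \<beta> * Y x) \<partial>M) = (\<integral>x. indicator B x * \<alpha> + \<beta> * (indicator B x * Y x) \<partial>M)"
    by (simp add: algebra_simps)
  also have "\<dots> = (\<integral>x. indicator B x * \<alpha> \<partial>M) + (\<integral>x. \<beta> * (indicator B x * Y x) \<partial>M)"
    by (rule Bochner_Integration.integral_add[OF i1 i2])
  also have "\<dots> = \<alpha> * measure M B + \<beta> * (\<integral>x. indicator B x * Y x \<partial>M)"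
    using assms(2) by (simp add: mult.commute)
  finally show ?thesis .
qed

context
  fixes M :: "'a measure" and F :: "nat \<Rightarrow> 'a measure" and X :: "nat \<Rightarrow> 'a \<Rightarrow> real"
  assumes prob: "prob_space M"
    and filt: "discrete_filtration M F"
    and smart: "supermartingale M F X"
    and lower: "\<And>n. AE x in M. X n x \<ge> - f (real n)"
begin

lemma XM: "X k \<in> borel_measurable M"
proof -
  have "subalgebra M (F k)" using filt unfolding discrete_filtration_def by auto
  moreover have "X k \<in> borel_measurable (F k)" using smart unfolding supermartingale_def by auto
  ultimately show ?thesis by (rule measurable_from_subalg)
qed

lemma Xint: "integrable M (X k)" using smart unfolding supermartingale_def by auto

lemma AA_sets: "AA M X g n \<in> sets M"
  unfolding AA_def using XM[measurable] by measurable

lemma EE_sets: "EE M X g N n \<in> sets M"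
  unfolding EE_def using XM[measurable] by measurable

lemma AA_F: "AA M X g (Suc n) \<in> sets (F n)"
proof -
  have sp: "space (F n) = space M" using filt unfolding discrete_filtration_def subalgebra_def by auto
  have [measurable]: "X k \<in> borel_measurable (F n)" if "k \<in> {..<Suc n}" for k
  proof -
    have "subalgebra (F n) (F k)" using filt that unfolding discrete_filtration_def subalgebra_def by auto
    moreover have "X k \<in> borel_measurable (F k)" using smart unfolding supermartingale_def by auto
    ultimately show ?thesis by (rule measurable_from_subalg)
  qed
  have "{x\<in>space (F n). \<forall>k\<in>{..<Suc n}. X k x < g (real k)} \<in> sets (F n)"
    by measurable
  then show ?thesis unfolding AA_def sp .
qed

lemma int_phi: "integrable M (\<lambda>x. indicator B x * phi f g N m (Y x))" if "B \<in> sets M" "integrable M Y"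
proof -
  interpret prob_space M by (rule prob)
  have "integrable M (\<lambda>x. (1 - aa f g N m * g (real m) / (g (real m) + f (real m)))
     + aa f g N m / (g (real m) + f (real m)) * Y x)"
    by (intro Bochner_Integration.integrable_add integrable_const integrable_mult_right that(2))
  from integrable_mult_indicator[OF that(1) this] show ?thesis unfolding phi_def by simp
qed

lemma split_le:
  "measure M (AA M X g m \<inter> {x. g (real m) \<le> X m x})
     + (\<integral>x. indicator (AA M X g (Suc m)) x * phi f g N m (X m x) \<partial>M)
   \<le> (\<integral>x. indicator (AA M X g m) x * phi f g N m (X m x) \<partial>M)"
proof -
  interpret prob_space M by (rule prob)
  have s1: "AA M X g m \<inter> {x. g (real m) \<le> X m x} \<in> sets M"
  proof -
    have "AA M X g m \<inter> {x. g (real m) \<le> X m x} = AA M X g m \<inter> {x\<in>space M. g (real m) \<le> X m x}"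
      unfolding AA_def by auto
    also have "\<dots> \<in> sets M" using AA_sets XM[measurable] by measurable
    finally show ?thesis .
  qed
  have "measure M (AA M X g m \<inter> {x. g (real m) \<le> X m x})
     + (\<integral>x. indicator (AA M X g (Suc m)) x * phi f g N m (X m x) \<partial>M)
    = (\<integral>x. indicator (AA M X g m \<inter> {x. g (real m) \<le> X m x}) x
          + indicator (AA M X g (Suc m)) x * phi f g N m (X m x) \<partial>M)"
  proof -
    have "(\<integral>x. indicator (AA M X g m \<inter> {x. g (real m) \<le> X m x}) x
          + indicator (AA M X g (Suc m)) x * phi f g N m (X m x) \<partial>M)
      = (\<integral>x. indicator (AA M X g m \<inter> {x. g (real m) \<le> X m x}) x \<partial>M)
          + (\<integral>x. indicator (AA M X g (Suc m)) x * phi f g N m (X m x) \<partial>M)"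
      using s1 by (intro Bochner_Integration.integral_add int_phi AA_sets Xint) (auto simp: integrable_indicator_iff less_top[symmetric])
    then show ?thesis using s1 by simp
  qed
  also have "\<dots> \<le> (\<integral>x. indicator (AA M X g m) x * phi f g N m (X m x) \<partial>M)"
  proof (rule integral_mono)
    show "integrable M (\<lambda>x. indicator (AA M X g m \<inter> {x. g (real m) \<le> X m x}) x
          + indicator (AA M X g (Suc m)) x * phi f g N m (X m x))"
      using s1 by (intro Bochner_Integration.integrable_add int_phi AA_sets Xint) (auto simp: integrable_indicator_iff less_top[symmetric])
    show "integrable M (\<lambda>x. indicator (AA M X g m) x * phi f g N m (X m x))"
      by (auto intro!: int_phi AA_sets Xint)
    fix x assume "x \<in> space M"
    show "indicator (AA M X g m \<inter> {x. g (real m) \<le> X m x}) x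
          + indicator (AA M X g (Suc m)) x * phi f g N m (X m x)
         \<le> indicator (AA M X g m) x * phi f g N m (X m x)"
      using phi_ge1[of m "X m x" N] unfolding AA_def
      by (auto simp: indicator_def lessThan_Suc)
  qed
  finally show ?thesis .
qed


lemma claim:
  assumes "n \<le> N"
  shows "measure M (EE M X g N n) \<le> measure M (AA M X g n \<inter> {x. g (real n) \<le> X n x})
     + (\<integral>x. indicator (AA M X g (Suc n)) x * phi f g N n (X n x) \<partial>M)"
  using assms
proof (induction n rule: inc_induct)
  case base
  interpret prob_space M by (rule prob)
  have "EE M X g N N = AA M X g N \<inter> {x. g (real N) \<le> X N x}"
    unfolding EE_def AA_def by auto
  moreover have "0 \<le> (\<integral>x. indicator (AA M X g (Suc N)) x * phi f g N N (X N x) \<partial>M)"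
  proof (rule integral_nonneg_AE)
    show "AE x in M. 0 \<le> indicator (AA M X g (Suc N)) x * phi f g N N (X N x)"
      using lower[of N] by eventually_elim (auto intro!: mult_nonneg_nonneg phi_nonneg)
  qed
  ultimately show ?case by simp
next
  case (step n)
  interpret prob_space M by (rule prob)
  have n: "n < N" by fact
  define a where "a = aa f g N (Suc n)"
  define c where "c = g (real (Suc n)) + f (real (Suc n))"
  define \<alpha> where "\<alpha> = 1 - a * g (real (Suc n)) / c"
  define \<beta> where "\<beta> = a / c"
  have phiS: "\<And>y. phi f g N (Suc n) y = \<alpha> + \<beta> * y"
    unfolding phi_def \<alpha>_def \<beta>_def a_def c_def by simp
  have \<beta>: "0 \<le> \<beta>" unfolding \<beta>_def a_def c_def using aa_pos[of N "Suc n"] cpos[of "real (Suc n)"] by simp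
  define B where "B = AA M X g (Suc n)"
  have B: "B \<in> sets M" unfolding B_def by (rule AA_sets)
  have setsplit: "EE M X g N n = (AA M X g n \<inter> {x. g (real n) \<le> X n x}) \<union> EE M X g N (Suc n)"
  proof (intro set_eqI iffI)
    fix x assume "x \<in> EE M X g N n"
    then obtain k where x: "x\<in>space M" "\<forall>k\<in>{..<n}. X k x < g (real k)" "k\<in>{n..N}" "g (real k) \<le> X k x"
      unfolding EE_def by auto
    show "x \<in> (AA M X g n \<inter> {x. g (real n) \<le> X n x}) \<union> EE M X g N (Suc n)"
    proof (cases "g (real n) \<le> X n x")
      case True then show ?thesis using x unfolding AA_def by auto
    next
      case False
      then have "k \<noteq> n" using x by auto
      then have "k \<in> {Suc n..N}" using x by auto
      with x False show ?thesis unfolding EE_def by (auto simp: lessThan_Suc)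
    qed
  next
    fix x assume "x \<in> (AA M X g n \<inter> {x. g (real n) \<le> X n x}) \<union> EE M X g N (Suc n)"
    then show "x \<in> EE M X g N n"
    proof
      assume "x \<in> AA M X g n \<inter> {x. g (real n) \<le> X n x}"
      moreover have "n \<in> {n..N}" using n by auto
      ultimately show ?thesis unfolding AA_def EE_def by blast
    next
      assume "x \<in> EE M X g N (Suc n)"
      then show ?thesis unfolding EE_def by (auto simp: lessThan_Suc)
    qed
  qed
  have s1: "AA M X g n \<inter> {x. g (real n) \<le> X n x} \<in> sets M"
  proof -
    have "AA M X g n \<inter> {x. g (real n) \<le> X n x} = AA M X g n \<inter> {x\<in>space M. g (real n) \<le> X n x}"
      unfolding AA_def by auto
    also have "\<dots> \<in> sets M" using AA_sets XM[measurable] by measurable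
    finally show ?thesis .
  qed
  have disj: "(AA M X g n \<inter> {x. g (real n) \<le> X n x}) \<inter> EE M X g N (Suc n) = {}"
    unfolding EE_def AA_def by (auto simp: lessThan_Suc)
  have "measure M (EE M X g N n) = measure M (AA M X g n \<inter> {x. g (real n) \<le> X n x}) + measure M (EE M X g N (Suc n))"
    unfolding setsplit using s1 EE_sets disj by (intro finite_measure_Union) auto
  also have "\<dots> \<le> measure M (AA M X g n \<inter> {x. g (real n) \<le> X n x})
      + (\<integral>x. indicator B x * phi f g N (Suc n) (X (Suc n) x) \<partial>M)"
    using step.IH split_le[of "Suc n" N] unfolding B_def by simp
  also have "(\<integral>x. indicator B x * phi f g N (Suc n) (X (Suc n) x) \<partial>M)
      = \<alpha> * measure M B + \<beta> * (\<integral>x. indicator B x * X (Suc n) x \<partial>M)"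
    unfolding phiS by (rule lin_int[OF finite_measure_axioms B Xint])
  also have "\<dots> \<le> \<alpha> * measure M B + \<beta> * (\<integral>x. indicator B x * X n x \<partial>M)"
    using supermart_step[OF prob filt smart AA_F[of n]] \<beta> unfolding B_def
    by (simp add: mult_left_mono)
  also have "\<dots> = (\<integral>x. indicator B x * phi f g N (Suc n) (X n x) \<partial>M)"
    unfolding phiS by (rule lin_int[OF finite_measure_axioms B Xint, symmetric])
  also have "\<dots> \<le> (\<integral>x. indicator B x * phi f g N n (X n x) \<partial>M)"
  proof (rule integral_mono_AE)
    show "integrable M (\<lambda>x. indicator B x * phi f g N (Suc n) (X n x))"
      by (rule int_phi[OF B Xint])
    show "integrable M (\<lambda>x. indicator B x * phi f g N n (X n x))"
      by (rule int_phi[OF B Xint])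
    show "AE x in M. indicator B x * phi f g N (Suc n) (X n x) \<le> indicator B x * phi f g N n (X n x)"
      using lower[of n] by eventually_elim (auto simp: indicator_def phi_step[OF n])
  qed
  finally show ?case unfolding B_def by simp
qed

lemma finite_bound:
  "measure M (EE M X g N 0) \<le> 1 - aa f g N 0 * (g 0 - integral\<^sup>L M (X 0)) / (g 0 + f 0)"
proof -
  interpret prob_space M by (rule prob)
  have A0: "AA M X g 0 = space M" unfolding AA_def by auto
  have "measure M (EE M X g N 0) \<le> (\<integral>x. indicator (AA M X g 0) x * phi f g N 0 (X 0 x) \<partial>M)"
    using claim[of 0 N] split_le[of 0 N] by simp
  also have "\<dots> = (\<integral>x. phi f g N 0 (X 0 x) \<partial>M)"
    unfolding A0 by (intro Bochner_Integration.integral_cong) auto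
  also have "\<dots> = (\<integral>x. indicator (space M) x * phi f g N 0 (X 0 x) \<partial>M)"
    by (intro Bochner_Integration.integral_cong) auto
  also have "\<dots> = (1 - aa f g N 0 * g 0 / (g 0 + f 0)) * measure M (space M)
      + aa f g N 0 / (g 0 + f 0) * (\<integral>x. indicator (space M) x * X 0 x \<partial>M)"
    unfolding phi_def of_nat_0 by (rule lin_int[OF finite_measure_axioms _ Xint]) simp
  also have "(\<integral>x. indicator (space M) x * X 0 x \<partial>M) = integral\<^sup>L M (X 0)"
    by (intro Bochner_Integration.integral_cong) auto
  also have "(1 - aa f g N 0 * g 0 / (g 0 + f 0)) * measure M (space M)
      + aa f g N 0 / (g 0 + f 0) * integral\<^sup>L M (X 0)
      = 1 - aa f g N 0 * (g 0 - integral\<^sup>L M (X 0)) / (g 0 + f 0)"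
    unfolding prob_space mult_1_right by (rule lin_aux) (use cpos[of 0] in simp)
  finally show ?thesis .
qed
end

end



context
  fixes f f' g :: "real \<Rightarrow> real"
  assumes f_nonneg: "\<And>t. t \<ge> 0 \<Longrightarrow> f t \<ge> 0"
    and g_nonneg: "\<And>t. t \<ge> 0 \<Longrightarrow> g t \<ge> 0"
    and f_mono: "mono_on {0..} f"
    and g_mono: "mono_on {0..} g"
    and f_deriv: "\<And>t. t \<ge> 0 \<Longrightarrow> (f has_real_derivative f' t) (at t within {0..})"
    and fg0: "- f 0 < g 0"
begin

lemma cpos': "t \<ge> 0 \<Longrightarrow> s \<ge> t \<Longrightarrow> g s + f t > 0"
proof -
  assume t: "t \<ge> 0" "s \<ge> t"
  have "g 0 \<le> g s" "f 0 \<le> f t" using t f_mono g_mono by (auto intro: mono_onD)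
  then show ?thesis using fg0 by linarith
qed

lemma dq_lim:
  assumes t: "t \<ge> 0"
  shows "(\<lambda>i. (f (t + inverse (real (Suc i))) - f t) * real (Suc i)) \<longlonglongrightarrow> f' t"
proof -
  have d: "((\<lambda>y. (f y - f t) / (y - t)) \<longlongrightarrow> f' t) (at t within {0..})"
    using f_deriv[OF t] by (simp add: has_field_derivative_iff)
  have s: "filterlim (\<lambda>i. t + inverse (real (Suc i))) (at t within {0..}) sequentially"
    unfolding filterlim_at
  proof
    show "\<forall>\<^sub>F i in sequentially. t + inverse (real (Suc i)) \<in> {0..} \<and> t + inverse (real (Suc i)) \<noteq> t"
    proof (intro always_eventually allI conjI)
      fix i :: nat
      have "0 < inverse (real (Suc i))" by simp
      then show "t + inverse (real (Suc i)) \<in> {0..}" "t + inverse (real (Suc i)) \<noteq> t"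
        using t by auto
    qed
    show "(\<lambda>i. t + inverse (real (Suc i))) \<longlonglongrightarrow> t"
      using tendsto_add[OF tendsto_const LIMSEQ_inverse_real_of_nat, of t] by simp
  qed
  from filterlim_compose[OF d s] show ?thesis by (simp add: divide_inverse)
qed

lemma f'_nonneg: "t \<ge> 0 \<Longrightarrow> f' t \<ge> 0"
proof -
  assume t: "t \<ge> 0"
  show ?thesis
  proof (rule LIMSEQ_le_const[OF dq_lim[OF t]], intro exI allI impI)
    fix i :: nat
    have "0 < inverse (real (Suc i))" by simp
    then have "f t \<le> f (t + inverse (real (Suc i)))" using t f_mono
      by (intro mono_onD[OF f_mono]) auto
    then show "0 \<le> (f (t + inverse (real (Suc i))) - f t) * real (Suc i)" by simp
  qed
qed

definition "fm t = f (max 0 t)"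
definition "gm t = g (max 0 t)"
definition "Dm t = (if 0 \<le> t then f' t else 0)"

lemma fm_meas: "fm \<in> borel_measurable borel"
  unfolding fm_def
proof (intro borel_measurable_mono monoI)
  fix x y :: real assume "x \<le> y"
  then show "f (max 0 x) \<le> f (max 0 y)" by (intro mono_onD[OF f_mono]) auto
qed

lemma gm_meas: "gm \<in> borel_measurable borel"
  unfolding gm_def
proof (intro borel_measurable_mono monoI)
  fix x y :: real assume "x \<le> y"
  then show "g (max 0 x) \<le> g (max 0 y)" by (intro mono_onD[OF g_mono]) auto
qed

lemma Dm_meas: "Dm \<in> borel_measurable borel"
proof (rule borel_measurable_LIMSEQ_real)
  fix t :: real
  show "(\<lambda>i. if 0 \<le> t then (fm (t + inverse (real (Suc i))) - fm t) * real (Suc i) else 0) \<longlonglongrightarrow> Dm t"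
  proof (cases "0 \<le> t")
    case True
    have "0 \<le> t + inverse (real (Suc i))" for i using True by (intro add_nonneg_nonneg) auto
    then have "(\<lambda>i. if 0 \<le> t then (fm (t + inverse (real (Suc i))) - fm t) * real (Suc i) else 0)
       = (\<lambda>i. (f (t + inverse (real (Suc i))) - f t) * real (Suc i))"
      using True unfolding fm_def by (simp add: max_absorb2)
    then show ?thesis using dq_lim[OF True] True by (simp add: Dm_def)
  qed (simp add: Dm_def)
next
  fix i
  note fm_meas[measurable]
  show "(\<lambda>t. if 0 \<le> t then (fm (t + inverse (real (Suc i))) - fm t) * real (Suc i) else 0) \<in> borel_measurable borel"
    by measurable
qed


lemma ftc_piece:
  fixes k :: nat
  defines "c \<equiv> g (real (Suc k))"
  shows "ennreal (ln (c + f (real (Suc k))) - ln (c + f (real k)))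
    = (\<integral>\<^sup>+ t. ennreal (f' t / (c + f t)) * indicator {real k..real (Suc k)} t \<partial>lborel)"
proof -
  have pos: "0 < c + f x" if "x \<in> {real k..real (Suc k)}" for x
    unfolding c_def using that by (intro cpos') auto
  have "((\<lambda>s. ln (c + f s)) has_vector_derivative (f' x / (c + f x))) (at x within {real k..real (Suc k)})"
    if x: "x \<in> {real k..real (Suc k)}" for x
  proof -
    have D: "(f has_real_derivative f' x) (at x within {real k..real (Suc k)})"
    proof -
      have "0 \<le> x" using x by (meson atLeastAtMost_iff of_nat_0_le_iff order_trans)
      moreover have "{real k..real (Suc k)} \<subseteq> {0..}" by auto
      ultimately show ?thesis using DERIV_subset f_deriv by blast
    qed
    have "((\<lambda>s. ln (c + f s)) has_real_derivative (1 / (c + f x)) * f' x) (at x within {real k..real (Suc k)})"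
    proof -
      have D2: "((\<lambda>s. c + f s) has_real_derivative 0 + f' x) (at x within {real k..real (Suc k)})"
        by (rule DERIV_add[OF DERIV_const D])
      show ?thesis using DERIV_chain2[OF DERIV_ln_divide[OF pos[OF x]] D2] by simp
    qed
    then show ?thesis by (simp add: has_real_derivative_iff_has_vector_derivative)
  qed
  then have "((\<lambda>x. f' x / (c + f x)) has_integral (ln (c + f (real (Suc k))) - ln (c + f (real k)))) {real k..real (Suc k)}"
    by (intro fundamental_theorem_of_calculus) auto
  then show ?thesis
  proof (intro nn_integral_has_integral_lebesgue'[symmetric])
    fix x assume x: "x \<in> {real k..real (Suc k)}"
    then have "0 \<le> x" by (meson atLeastAtMost_iff of_nat_0_le_iff order_trans)
    then show "0 \<le> f' x / (c + f x)" using pos[OF x] f'_nonneg[of x] by simp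
  qed
qed


lemma ind_sum: "(\<Sum>k<N. (indicator {real k..<real (Suc k)} t :: ennreal)) = indicator {0..<real N} t"
proof (induction N)
  case (Suc N)
  have "(\<Sum>k<Suc N. (indicator {real k..<real (Suc k)} t :: ennreal))
     = indicator {0..<real N} t + indicator {real N..<real (Suc N)} t"
    using Suc by simp
  also have "\<dots> = indicator {0..<real (Suc N)} t"
    by (auto simp: indicator_def)
  finally show ?case .
qed simp

lemma piece_le:
  fixes k :: nat
  shows "ennreal (ln (g (real (Suc k)) + f (real (Suc k))) - ln (g (real (Suc k)) + f (real k)))
    \<le> (\<integral>\<^sup>+ t. ennreal (f' t / (g t + f t)) * indicator {real k..<real (Suc k)} t \<partial>lborel)"
proof -
  let ?c = "g (real (Suc k))"
  have "ennreal (ln (?c + f (real (Suc k))) - ln (?c + f (real k)))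
    = (\<integral>\<^sup>+ t. ennreal (f' t / (?c + f t)) * indicator {real k..real (Suc k)} t \<partial>lborel)"
    by (rule ftc_piece)
  also have "\<dots> \<le> (\<integral>\<^sup>+ t. ennreal (f' t / (g t + f t)) * indicator {real k..real (Suc k)} t \<partial>lborel)"
  proof (rule nn_integral_mono)
    fix t :: real
    show "ennreal (f' t / (?c + f t)) * indicator {real k..real (Suc k)} t
      \<le> ennreal (f' t / (g t + f t)) * indicator {real k..real (Suc k)} t"
    proof (cases "t \<in> {real k..real (Suc k)}")
      case True
      then have t0: "0 \<le> t" by (meson atLeastAtMost_iff of_nat_0_le_iff order_trans)
      have "g t \<le> ?c" using True t0 by (intro mono_onD[OF g_mono]) auto
      moreover have "0 < g t + f t" using t0 by (intro cpos') auto
      ultimately have "f' t / (?c + f t) \<le> f' t / (g t + f t)"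
        using f'_nonneg[OF t0] by (intro divide_left_mono) auto
      then show ?thesis using True by (simp add: ennreal_leI)
    qed simp
  qed
  also have "\<dots> = (\<integral>\<^sup>+ t. ennreal (f' t / (g t + f t)) * indicator {real k..<real (Suc k)} t \<partial>lborel)"
  proof (rule nn_integral_cong_AE)
    show "AE t in lborel. ennreal (f' t / (g t + f t)) * indicator {real k..real (Suc k)} t
       = ennreal (f' t / (g t + f t)) * indicator {real k..<real (Suc k)} t"
      using AE_lborel_singleton[of "real (Suc k)"] by eventually_elim (auto simp: indicator_def)
  qed
  finally show ?thesis .
qed

lemma piece_meas:
  "(\<lambda>t. ennreal (f' t / (g t + f t)) * indicator {real k..<real (Suc k)} t) \<in> borel_measurable lborel"
proof -
  note fm_meas[measurable] gm_meas[measurable] Dm_meas[measurable]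
  have A: "(\<lambda>t. ennreal (Dm t / (gm t + fm t)) * indicator {real k..<real (Suc k)} t) \<in> borel_measurable lborel"
    by measurable
  have eq: "(\<lambda>t. ennreal (Dm t / (gm t + fm t)) * indicator {real k..<real (Suc k)} t)
     = (\<lambda>t. ennreal (f' t / (g t + f t)) * indicator {real k..<real (Suc k)} t)"
  proof
    fix t :: real
    show "ennreal (Dm t / (gm t + fm t)) * indicator {real k..<real (Suc k)} t
     = ennreal (f' t / (g t + f t)) * indicator {real k..<real (Suc k)} t"
    proof (cases "t \<in> {real k..<real (Suc k)}")
      case True
      then have t0: "0 \<le> t" by (meson atLeastLessThan_iff of_nat_0_le_iff order_trans)
      then show ?thesis by (simp add: Dm_def gm_def fm_def max_absorb2)
    qed simp
  qed
  show ?thesis using A unfolding eq .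
qed

lemma sum_le_I:
  "ennreal (\<Sum>k<N. ln (g (real (Suc k)) + f (real (Suc k))) - ln (g (real (Suc k)) + f (real k)))
    \<le> (\<integral>\<^sup>+ t \<in> {0..}. ennreal (f' t / (g t + f t)) \<partial>lborel)"
proof -
  have L0: "0 \<le> ln (g (real (Suc k)) + f (real (Suc k))) - ln (g (real (Suc k)) + f (real k))" for k
  proof -
    have "f (real k) \<le> f (real (Suc k))" by (intro mono_onD[OF f_mono]) auto
    moreover have "0 < g (real (Suc k)) + f (real k)" by (intro cpos') auto
    ultimately show ?thesis by simp
  qed
  have "ennreal (\<Sum>k<N. ln (g (real (Suc k)) + f (real (Suc k))) - ln (g (real (Suc k)) + f (real k)))
     = (\<Sum>k<N. ennreal (ln (g (real (Suc k)) + f (real (Suc k))) - ln (g (real (Suc k)) + f (real k))))"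
    using L0 by (simp add: sum_ennreal)
  also have "\<dots> \<le> (\<Sum>k<N. \<integral>\<^sup>+ t. ennreal (f' t / (g t + f t)) * indicator {real k..<real (Suc k)} t \<partial>lborel)"
    by (intro sum_mono piece_le)
  also have "\<dots> = (\<integral>\<^sup>+ t. (\<Sum>k<N. ennreal (f' t / (g t + f t)) * indicator {real k..<real (Suc k)} t) \<partial>lborel)"
    by (rule nn_integral_sum[symmetric]) (rule piece_meas)
  also have "\<dots> \<le> (\<integral>\<^sup>+ t \<in> {0..}. ennreal (f' t / (g t + f t)) \<partial>lborel)"
  proof (rule nn_integral_mono)
    fix t :: real
    have "(\<Sum>k<N. ennreal (f' t / (g t + f t)) * indicator {real k..<real (Suc k)} t)
       = ennreal (f' t / (g t + f t)) * indicator {0..<real N} t"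
      by (simp only: sum_distrib_left[symmetric] ind_sum)
    also have "\<dots> \<le> ennreal (f' t / (g t + f t)) * indicator {0..} t"
      by (intro mult_left_mono) (auto simp: indicator_def)
    finally show "(\<Sum>k<N. ennreal (f' t / (g t + f t)) * indicator {real k..<real (Suc k)} t)
       \<le> ennreal (f' t / (g t + f t)) * indicator {0..} t" .
  qed
  finally show ?thesis .
qed

end


theorem corollary2:
  fixes f f' g :: "real \<Rightarrow> real"
    and M :: "'a measure" and F :: "nat \<Rightarrow> 'a measure" and X :: "nat \<Rightarrow> 'a \<Rightarrow> real"
  assumes f_nonneg: "\<And>t. t \<ge> 0 \<Longrightarrow> f t \<ge> 0"
    and g_nonneg: "\<And>t. t \<ge> 0 \<Longrightarrow> g t \<ge> 0"
    and f_mono: "mono_on {0..} f"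
    and g_mono: "mono_on {0..} g"
    and f_deriv: "\<And>t. t \<ge> 0 \<Longrightarrow> (f has_real_derivative f' t) (at t within {0..})"
    and fg0: "- f 0 < g 0"
    and prob: "prob_space M"
    and filt: "discrete_filtration M F"
    and smart: "supermartingale M F X"
    and lower: "\<And>n. AE x in M. X n x \<ge> - f (real n)"
    and EM0: "integral\<^sup>L M (X 0) \<in> {- f 0 .. g 0}"
  shows "measure M {x \<in> space M. \<exists>n. X n x \<ge> g (real n)}
    \<le> 1 - (g 0 - integral\<^sup>L M (X 0)) / (g 0 + f 0) *
         (let I = (\<integral>\<^sup>+ t \<in> {0..}. ennreal (f' t / (g t + f t)) \<partial>lborel)
          in if I = \<infinity> then 0 else exp (- enn2real I))"
  proof -
  define I where "I = (\<integral>\<^sup>+ t \<in> {0..}. ennreal (f' t / (g t + f t)) \<partial>lborel)"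
  define E where "E = (if I = \<infinity> then 0 else exp (- enn2real I))"
  define L where "L k = ln (g (real (Suc k)) + f (real (Suc k))) - ln (g (real (Suc k)) + f (real k))" for k
  interpret prob_space M by (rule prob)
  have E_le: "E \<le> aa f g N 0" for N
  proof (cases "I = \<infinity>")
    case True
    then show ?thesis unfolding E_def using aa_pos[OF f_nonneg g_nonneg f_mono g_mono fg0, of N 0] by simp
  next
    case False
    have rr: "rr f g k = exp (- L k)" for k
    proof -
      have A: "0 < g (real (Suc k)) + f (real (Suc k))" by (intro cpos'[OF f_nonneg g_nonneg f_mono g_mono f_deriv fg0]) auto
      have B: "0 < g (real (Suc k)) + f (real k)" by (intro cpos'[OF f_nonneg g_nonneg f_mono g_mono f_deriv fg0]) auto
      show ?thesis unfolding L_def rr_def using A B by (simp add: exp_diff)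
    qed
    have "aa f g N 0 = (\<Prod>k<N. exp (- L k))" unfolding aa_def rr by (simp add: atLeast0LessThan)
    also have "\<dots> = exp (- (\<Sum>k<N. L k))" by (simp add: sum_negf[symmetric] exp_sum)
    finally have aeq: "aa f g N 0 = exp (- (\<Sum>k<N. L k))" .
    have Lnn: "0 \<le> L k" for k
    proof -
      have "f (real k) \<le> f (real (Suc k))" by (intro mono_onD[OF f_mono]) auto
      moreover have "0 < g (real (Suc k)) + f (real k)" by (intro cpos'[OF f_nonneg g_nonneg f_mono g_mono f_deriv fg0]) auto
      ultimately show ?thesis unfolding L_def by simp
    qed
    have "ennreal (\<Sum>k<N. L k) \<le> I"
      unfolding I_def L_def by (rule sum_le_I[OF f_nonneg g_nonneg f_mono g_mono f_deriv fg0])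
    then have "enn2real (ennreal (\<Sum>k<N. L k)) \<le> enn2real I"
      using False by (intro enn2real_mono) (auto simp: top.not_eq_extremum)
    then have "(\<Sum>k<N. L k) \<le> enn2real I" using Lnn by (simp add: sum_nonneg)
    then show ?thesis unfolding E_def aeq using False by simp
  qed
  have E0: "0 \<le> E" unfolding E_def by simp
  have c0: "0 \<le> (g 0 - integral\<^sup>L M (X 0)) / (g 0 + f 0)"
    using EM0 cpos'[OF f_nonneg g_nonneg f_mono g_mono f_deriv fg0, of 0 0] by simp
  have bnd: "measure M (EE M X g N 0) \<le> 1 - (g 0 - integral\<^sup>L M (X 0)) / (g 0 + f 0) * E" for N
  proof -
    have "measure M (EE M X g N 0) \<le> 1 - aa f g N 0 * (g 0 - integral\<^sup>L M (X 0)) / (g 0 + f 0)"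
      by (rule finite_bound[OF f_nonneg g_nonneg f_mono g_mono fg0 prob filt smart lower])
    also have "\<dots> = 1 - (g 0 - integral\<^sup>L M (X 0)) / (g 0 + f 0) * aa f g N 0" by simp
    also have "\<dots> \<le> 1 - (g 0 - integral\<^sup>L M (X 0)) / (g 0 + f 0) * E"
      using mult_left_mono[OF E_le[of N] c0] by linarith
    finally show ?thesis .
  qed
  have U: "{x \<in> space M. \<exists>n. X n x \<ge> g (real n)} = (\<Union>N. EE M X g N 0)"
    unfolding EE_def by (auto intro: atLeastAtMost_iff[THEN iffD2])
  have inc: "incseq (\<lambda>N. EE M X g N 0)"
  proof (rule incseq_SucI)
    fix N show "EE M X g N 0 \<subseteq> EE M X g (Suc N) 0"
      unfolding EE_def by (auto intro: le_SucI)
  qed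
  have lim: "(\<lambda>N. measure M (EE M X g N 0)) \<longlonglongrightarrow> measure M (\<Union>N. EE M X g N 0)"
    using inc EE_sets[OF f_nonneg g_nonneg f_mono g_mono fg0 prob filt smart lower]
    by (intro finite_Lim_measure_incseq) auto
  have "measure M {x \<in> space M. \<exists>n. X n x \<ge> g (real n)} \<le> 1 - (g 0 - integral\<^sup>L M (X 0)) / (g 0 + f 0) * E"
    unfolding U using lim bnd by (intro LIMSEQ_le_const2) auto
  then show ?thesis unfolding E_def I_def Let_def .
qed

end
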